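(* Let $m<M$ be real numbers and let $X$ be a random variable taking values in $[m,M]$, either discrete (taking finitely many values $x_1,\dots,x_n\in[m,M]$ with probabilities $p_1,\dots,p_n$) or continuous (with probability density $f$ on $[m,M]$). Let $\mu_1'$ be its mean and $\mu_2,\mu_3,\mu_4$ its second, third and fourth central moments, and assume $\mu_2\neq(\mu_1'-m)(M-\mu_1')$. Then $$\mu_4\le (\mu_1'-m)(M-\mu_1')\mu_2+(m+M-2\mu_1')\mu_3-\frac{\big(\mu_3-(m+M-2\mu_1')\mu_2\big)^2}{(\mu_1'-m)(M-\mu_1')-\mu_2}.$$
   Context: The mean is $\mu_1'=\sum_{i=1}^n p_i x_i$ (discrete case) or $\mu_1'=\int_m^M x f(x)\,dx$ (continuous case), where $\sum p_i=1$, resp. $\int_m^M f(x)\,dx=1$. The $r$-th central moment is $\mu_r=\sum_{i=1}^n p_i (x_i-\mu_1')^r$, resp. $\mu_r=\int_m^M (x-\mu_1')^r f(x)\,dx$. *)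

theory Defs
  imports "HOL-Analysis.Analysis"
begin

definition disc_mean :: "nat \<Rightarrow> (nat \<Rightarrow> real) \<Rightarrow> (nat \<Rightarrow> real) \<Rightarrow> real" where
  "disc_mean n p x = (\<Sum>i=1..n. p i * x i)"

definition disc_cmom :: "nat \<Rightarrow> nat \<Rightarrow> (nat \<Rightarrow> real) \<Rightarrow> (nat \<Rightarrow> real) \<Rightarrow> real" where
  "disc_cmom r n p x = (\<Sum>i=1..n. p i * (x i - disc_mean n p x) ^ r)"

definition cont_mean :: "real \<Rightarrow> real \<Rightarrow> (real \<Rightarrow> real) \<Rightarrow> real" where
  "cont_mean m M f = integral {m..M} (\<lambda>t. t * f t)"

definition cont_cmom :: "nat \<Rightarrow> real \<Rightarrow> real \<Rightarrow> (real \<Rightarrow> real) \<Rightarrow> real" where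
  "cont_cmom r m M f = integral {m..M} (\<lambda>t. (t - cont_mean m M f) ^ r * f t)"

definition mom4_bound :: "real \<Rightarrow> real \<Rightarrow> real \<Rightarrow> real \<Rightarrow> real \<Rightarrow> real" where
  "mom4_bound m M mu1 mu2 mu3 =
     (mu1 - m) * (M - mu1) * mu2 + (m + M - 2 * mu1) * mu3
     - (mu3 - (m + M - 2 * mu1) * mu2) ^ 2 / ((mu1 - m) * (M - mu1) - mu2)"

end

theory Submission
  imports Defs
begin

lemma poly_id:
  fixes m M mu c x :: real
  shows "(M - x) * (x - m) * (x - mu - c)^2 =
    (mu-m)*(M-mu)*c^2 + (-2*(mu-m)*(M-mu)*c + (m+M-2*mu)*c^2) * (x-mu)
    + ((mu-m)*(M-mu) - 2*c*(m+M-2*mu) - c^2) * (x-mu)^2 + ((m+M-2*mu) + 2*c) * (x-mu)^3 + (-1) * (x-mu)^4"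
  by algebra

lemma poly_id2:
  fixes m M mu x :: real
  shows "(M - x) * (x - m) =
    (mu-m)*(M-mu) + (m+M-2*mu) * (x-mu) + (-1) * (x-mu)^2 + 0 * (x-mu)^3 + 0 * (x-mu)^4"
  by algebra

lemma key:
  fixes m M mu mu2 mu3 mu4 :: real
  assumes D: "0 \<le> (mu-m)*(M-mu) - mu2" and ne: "mu2 \<noteq> (mu-m)*(M-mu)"
    and H: "\<And>c. 0 \<le> (mu-m)*(M-mu)*c^2 + ((mu-m)*(M-mu) - 2*c*(m+M-2*mu) - c^2) * mu2
                  + ((m+M-2*mu) + 2*c) * mu3 + (-1) * mu4"
  shows "mu4 \<le> mom4_bound m M mu mu2 mu3"
proof -
  define D where "D = (mu-m)*(M-mu) - mu2"
  define K where "K = (m+M-2*mu)*mu2 - mu3"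
  have Dp: "D > 0" using assms unfolding D_def by auto
  have e: "(mu-m)*(M-mu)*c^2 + ((mu-m)*(M-mu) - 2*c*(m+M-2*mu) - c^2) * mu2
                  + ((m+M-2*mu) + 2*c) * mu3 + (-1) * mu4
        = D*c^2 - 2*c*K + (mu-m)*(M-mu)*mu2 + (m+M-2*mu)*mu3 - mu4" for c
    unfolding D_def K_def by algebra
  have "0 \<le> D*(K/D)^2 - 2*(K/D)*K + (mu-m)*(M-mu)*mu2 + (m+M-2*mu)*mu3 - mu4"
    using H[of "K/D"] e[of "K/D"] by simp
  moreover have "D*(K/D)^2 - 2*(K/D)*K = -(K^2/D)" using Dp
    by (simp add: field_simps power2_eq_square)
  moreover have "mom4_bound m M mu mu2 mu3 = (mu-m)*(M-mu)*mu2 + (m+M-2*mu)*mu3 - K^2/D"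
    unfolding mom4_bound_def D_def K_def by (simp add: power2_commute)
  ultimately show ?thesis by linarith
qed

lemma sum_poly:
  fixes p d :: "nat \<Rightarrow> real"
  shows "(\<Sum>i\<in>S. p i * (A + B*d i + C*d i^2 + E*d i^3 + F*d i^4)) =
     A*(\<Sum>i\<in>S. p i) + B*(\<Sum>i\<in>S. p i * d i) + C*(\<Sum>i\<in>S. p i * d i^2)
     + E*(\<Sum>i\<in>S. p i * d i^3) + F*(\<Sum>i\<in>S. p i * d i^4)"
  by (simp add: sum.distrib sum_distrib_left algebra_simps)

lemma disc_part:
  fixes m M :: real
  assumes "\<forall>i\<in>{1..n}. 0 \<le> p i \<and> x i \<in> {m..M}" "(\<Sum>i=1..n. p i) = 1"
    "disc_cmom 2 n p x \<noteq> (disc_mean n p x - m) * (M - disc_mean n p x)"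
  shows "disc_cmom 4 n p x \<le> mom4_bound m M (disc_mean n p x) (disc_cmom 2 n p x) (disc_cmom 3 n p x)"
proof -
  define mu where "mu = disc_mean n p x"
  define d where "d i = x i - mu" for i
  have s1: "(\<Sum>i=1..n. p i * d i) = 0"
  proof -
    have "(\<Sum>i=1..n. p i * d i) = (\<Sum>i=1..n. p i * x i) - mu * (\<Sum>i=1..n. p i)"
      unfolding d_def by (simp add: sum_subtractf sum_distrib_left algebra_simps)
    then show ?thesis using assms(2) unfolding mu_def disc_mean_def by simp
  qed
  have mom: "disc_cmom k n p x = (\<Sum>i=1..n. p i * d i ^ k)" for k
    unfolding disc_cmom_def d_def mu_def by simp
  have G: "0 \<le> (\<Sum>i=1..n. p i * ((M - x i) * (x i - m) * (x i - mu - c)^2))" for c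
    using assms(1) by (intro sum_nonneg) (auto intro!: mult_nonneg_nonneg)
  have G2: "0 \<le> (\<Sum>i=1..n. p i * ((M - x i) * (x i - m)))"
    using assms(1) by (intro sum_nonneg) (auto intro!: mult_nonneg_nonneg)
  show ?thesis
    unfolding mu_def[symmetric]
  proof (rule key)
    show "0 \<le> (mu-m)*(M-mu) - disc_cmom 2 n p x"
    proof -
      have "(\<Sum>i=1..n. p i * ((M - x i) * (x i - m))) = (\<Sum>i=1..n. p i * ((mu-m)*(M-mu) + (m+M-2*mu) * d i + (-1) * d i^2 + 0 * d i^3 + 0 * d i^4))"
        by (intro sum.cong refl) (unfold d_def, rule arg_cong[where f="\<lambda>z. p _ * z"], rule poly_id2)
      then show ?thesis using G2 unfolding sum_poly s1 mom assms(2) by simp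
    qed
    show "disc_cmom 2 n p x \<noteq> (mu-m)*(M-mu)" using assms(3) mu_def by simp
    fix c
    show "0 \<le> (mu-m)*(M-mu)*c^2 + ((mu-m)*(M-mu) - 2*c*(m+M-2*mu) - c^2) * disc_cmom 2 n p x
                  + ((m+M-2*mu) + 2*c) * disc_cmom 3 n p x + (-1) * disc_cmom 4 n p x"
    proof -
      have "(\<Sum>i=1..n. p i * ((M - x i) * (x i - m) * (x i - mu - c)^2)) = (\<Sum>i=1..n. p i * ((mu-m)*(M-mu)*c^2 + (-2*(mu-m)*(M-mu)*c + (m+M-2*mu)*c^2) * d i
    + ((mu-m)*(M-mu) - 2*c*(m+M-2*mu) - c^2) * d i^2 + ((m+M-2*mu) + 2*c) * d i^3 + (-1) * d i^4))"
        by (intro sum.cong refl) (unfold d_def, rule arg_cong[where f="\<lambda>z. p _ * z"], rule poly_id)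
      then show ?thesis using G[of c] unfolding sum_poly s1 mom assms(2) by simp
    qed
  qed
qed


lemma cont_integrable:
  fixes f g :: "real \<Rightarrow> real"
  assumes "\<forall>t\<in>{m..M}. 0 \<le> f t" "f integrable_on {m..M}" "continuous_on {m..M} g"
  shows "(\<lambda>t. g t * f t) integrable_on {m..M}"
proof -
  have fa: "f absolutely_integrable_on {m..M}"
    using assms by (intro nonnegative_absolutely_integrable_1) auto
  have "bounded (g ` {m..M})"
    by (intro compact_imp_bounded compact_continuous_image assms(3)) simp
  then have "(\<lambda>t. g t * f t) absolutely_integrable_on {m..M}"
    by (intro absolutely_integrable_bounded_measurable_product_real fa
        continuous_imp_measurable_on_sets_lebesgue assms(3)) auto
  then show ?thesis unfolding absolutely_integrable_on_def by blast
qed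

lemma int_poly:
  fixes f d :: "real \<Rightarrow> real"
  assumes "(f has_integral I0) S" "((\<lambda>t. d t * f t) has_integral I1) S"
    "((\<lambda>t. d t^2 * f t) has_integral I2) S" "((\<lambda>t. d t^3 * f t) has_integral I3) S"
    "((\<lambda>t. d t^4 * f t) has_integral I4) S"
  shows "((\<lambda>t. (A + B*d t + C*d t^2 + E*d t^3 + F*d t^4) * f t) has_integral
      (A*I0 + B*I1 + C*I2 + E*I3 + F*I4)) S"
proof -
  have "((\<lambda>t. A * f t + B * (d t * f t) + C * (d t^2 * f t) + E * (d t^3 * f t) + F * (d t^4 * f t))
      has_integral (A*I0 + B*I1 + C*I2 + E*I3 + F*I4)) S"
    by (intro has_integral_add has_integral_mult_right assms)
  moreover have "(\<lambda>t. A * f t + B * (d t * f t) + C * (d t^2 * f t) + E * (d t^3 * f t) + F * (d t^4 * f t))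
     = (\<lambda>t. (A + B*d t + C*d t^2 + E*d t^3 + F*d t^4) * f t)"
    by (rule ext) (simp add: algebra_simps)
  ultimately show ?thesis by simp
qed

lemma cont_part:
  fixes m M :: real and f :: "real \<Rightarrow> real"
  assumes f0: "\<forall>t\<in>{m..M}. 0 \<le> f t" and f1: "(f has_integral 1) {m..M}"
    and ne: "cont_cmom 2 m M f \<noteq> (cont_mean m M f - m) * (M - cont_mean m M f)"
  shows "cont_cmom 4 m M f \<le> mom4_bound m M (cont_mean m M f) (cont_cmom 2 m M f) (cont_cmom 3 m M f)"
proof -
  define mu where "mu = cont_mean m M f"
  define d where "d t = t - mu" for t
  have fi: "f integrable_on {m..M}" using f1 by blast
  have Pk: "((\<lambda>t. d t ^ k * f t) has_integral cont_cmom k m M f) {m..M}" for k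
  proof -
    have "(\<lambda>t. d t ^ k * f t) integrable_on {m..M}"
      unfolding d_def by (intro cont_integrable f0 fi continuous_intros)
    then show ?thesis unfolding cont_cmom_def d_def mu_def by (rule integrable_integral)
  qed
  have P1: "((\<lambda>t. d t * f t) has_integral 0) {m..M}"
  proof -
    have "(\<lambda>t. t * f t) integrable_on {m..M}"
      by (intro cont_integrable f0 fi continuous_intros)
    then have a: "((\<lambda>t. t * f t) has_integral mu) {m..M}"
      unfolding mu_def cont_mean_def by (rule integrable_integral)
    have "((\<lambda>t. t * f t - mu * f t) has_integral (mu - mu * 1)) {m..M}"
      by (intro has_integral_diff a has_integral_mult_right f1)
    moreover have "(\<lambda>t. t * f t - mu * f t) = (\<lambda>t. d t * f t)"
      by (rule ext) (simp add: d_def algebra_simps)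
    ultimately show ?thesis by simp
  qed
  show ?thesis
    unfolding mu_def[symmetric]
  proof (rule key)
    show "0 \<le> (mu-m)*(M-mu) - cont_cmom 2 m M f"
    proof -
      have h: "((\<lambda>t. ((mu-m)*(M-mu) + (m+M-2*mu) * d t + (-1) * d t^2 + 0 * d t^3 + 0 * d t^4) * f t)
         has_integral ((mu-m)*(M-mu)*1 + (m+M-2*mu)*0 + (-1)*cont_cmom 2 m M f + 0 * cont_cmom 3 m M f + 0 * cont_cmom 4 m M f)) {m..M}"
        by (intro int_poly f1 P1 Pk)
      have "0 \<le> (mu-m)*(M-mu)*1 + (m+M-2*mu)*0 + (-1)*cont_cmom 2 m M f + 0 * cont_cmom 3 m M f + 0 * cont_cmom 4 m M f"
      proof (rule has_integral_nonneg[OF h])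
        fix t assume t: "t \<in> {m..M}"
        have "((mu-m)*(M-mu) + (m+M-2*mu) * d t + (-1) * d t^2 + 0 * d t^3 + 0 * d t^4) = (M - t) * (t - m)"
          unfolding d_def by (rule poly_id2[symmetric])
        then show "0 \<le> ((mu-m)*(M-mu) + (m+M-2*mu) * d t + (-1) * d t^2 + 0 * d t^3 + 0 * d t^4) * f t"
          using t f0 by simp
      qed
      then show ?thesis by simp
    qed
    show "cont_cmom 2 m M f \<noteq> (mu-m)*(M-mu)" using ne mu_def by simp
    fix c
    have h: "((\<lambda>t. ((mu-m)*(M-mu)*c^2 + (-2*(mu-m)*(M-mu)*c + (m+M-2*mu)*c^2) * d t
    + ((mu-m)*(M-mu) - 2*c*(m+M-2*mu) - c^2) * d t^2 + ((m+M-2*mu) + 2*c) * d t^3 + (-1) * d t^4) * f t)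
         has_integral ((mu-m)*(M-mu)*c^2*1 + (-2*(mu-m)*(M-mu)*c + (m+M-2*mu)*c^2) * 0
    + ((mu-m)*(M-mu) - 2*c*(m+M-2*mu) - c^2) * cont_cmom 2 m M f + ((m+M-2*mu) + 2*c) * cont_cmom 3 m M f + (-1) * cont_cmom 4 m M f)) {m..M}"
      by (intro int_poly f1 P1 Pk)
    have "0 \<le> (mu-m)*(M-mu)*c^2*1 + (-2*(mu-m)*(M-mu)*c + (m+M-2*mu)*c^2) * 0
    + ((mu-m)*(M-mu) - 2*c*(m+M-2*mu) - c^2) * cont_cmom 2 m M f + ((m+M-2*mu) + 2*c) * cont_cmom 3 m M f + (-1) * cont_cmom 4 m M f"
    proof (rule has_integral_nonneg[OF h])
      fix t assume t: "t \<in> {m..M}"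
      have "((mu-m)*(M-mu)*c^2 + (-2*(mu-m)*(M-mu)*c + (m+M-2*mu)*c^2) * d t
    + ((mu-m)*(M-mu) - 2*c*(m+M-2*mu) - c^2) * d t^2 + ((m+M-2*mu) + 2*c) * d t^3 + (-1) * d t^4) = (M - t) * (t - m) * (t - mu - c)^2"
        unfolding d_def by (rule poly_id[symmetric])
      then show "0 \<le> ((mu-m)*(M-mu)*c^2 + (-2*(mu-m)*(M-mu)*c + (m+M-2*mu)*c^2) * d t
    + ((mu-m)*(M-mu) - 2*c*(m+M-2*mu) - c^2) * d t^2 + ((m+M-2*mu) + 2*c) * d t^3 + (-1) * d t^4) * f t"
        using t f0 by simp
    qed
    then show "0 \<le> (mu-m)*(M-mu)*c^2 + ((mu-m)*(M-mu) - 2*c*(m+M-2*mu) - c^2) * cont_cmom 2 m M f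
                  + ((m+M-2*mu) + 2*c) * cont_cmom 3 m M f + (-1) * cont_cmom 4 m M f" by simp
  qed
qed

theorem theorem2p2:
  fixes m M :: real
  assumes "m < M"
  shows
    "(\<forall>(n::nat) (p::nat \<Rightarrow> real) (x::nat \<Rightarrow> real).
        (\<forall>i\<in>{1..n}. 0 \<le> p i \<and> x i \<in> {m..M}) \<and> (\<Sum>i=1..n. p i) = 1 \<and>
        disc_cmom 2 n p x \<noteq> (disc_mean n p x - m) * (M - disc_mean n p x)
        \<longrightarrow> disc_cmom 4 n p x \<le>
              mom4_bound m M (disc_mean n p x) (disc_cmom 2 n p x) (disc_cmom 3 n p x))
   \<and> (\<forall>f :: real \<Rightarrow> real.
        (\<forall>t\<in>{m..M}. 0 \<le> f t) \<and> (f has_integral 1) {m..M} \<and>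
        cont_cmom 2 m M f \<noteq> (cont_mean m M f - m) * (M - cont_mean m M f)
        \<longrightarrow> cont_cmom 4 m M f \<le>
              mom4_bound m M (cont_mean m M f) (cont_cmom 2 m M f) (cont_cmom 3 m M f))"
  using disc_part cont_part by blast

end
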